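(* Assume that for every $w\in\mathcal W$ the loss $\ell(w,Z)$, $Z\sim P_Z$, is $\sigma$-sub-Gaussian, and that for every $z\in\mathcal Z$ the map $w\mapsto \ell(w,z)$ is $K$-Lipschitz with respect to $d_{\mathcal W}$. Fix any data-independent probability distribution $Q_{W'W}$ on $\mathcal W\times\mathcal W$, any $k>0$ and any $\epsilon\in(0,1)$. Then with probability at least $1-\epsilon$ over $S\sim P_Z^{n}$, $$\Delta\le \frac{k\sigma^2}{2n}+\frac{D(P_{W'W|S}\,\|\,Q_{W'W})-\log\epsilon}{k}+\frac1k\log \mathbb E_{(W',W)\sim Q_{W'W}}\Big[e^{kK\,d_{\mathcal W}(W',W)}\Big].$$
   Context: Setting. Let $\mathcal Z=\mathcal X\times\mathcal Y$ be an instance space with data distribution $P_Z$, and let $S=(Z_1,\dots,Z_n)\sim P_Z^{n}$ be a training set of $n$ i.i.d. samples. An augmented network has $L+1$ layers with weights $W=(W^{(1)},\dots,W^{(L+1)})\in\mathcal W=\mathcal W^{(1)}\times\cdots\times\mathcal W^{(L+1)}$. A distinguished index $l_0$ is the channel layer: $\mathcal W^{(l_0)}=\mathbb R^{d\times d}\times\mathbb R^{d}$, with weights $W^{(l_0)}=(M^{(l_0)},B^{(l_0)})$ acting on a feature $f\in\mathbb R^d$ by $f\mapsto M^{(l_0)}f+B^{(l_0)}$. The other weights $\tilde W=(W^{(l)})_{l\ne l_0}\in\tilde{\mathcal W}=\prod_{l\neq l_0}\mathcal W^{(l)}$ are the learnable weights. A learning algorithm is a Markov kernel $P_{\tilde W|S}$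 from $\mathcal Z^n$ to $\tilde{\mathcal W}$; the channel-free training distribution on $\mathcal W$ is $P_{W|S}=P_{\tilde W|S}\otimes\delta_{(\mathbf I_d,\mathbf 0)}$ (channel layer fixed to identity matrix and zero bias). A channel is a Markov kernel $P_{W'^{(l_0)}|W^{(l_0)}}$ on $\mathcal W^{(l_0)}$; the deployment kernel $P_{W'|W}$ sets $W'^{(l)}=W^{(l)}$ for all $l\ne l_0$ and draws $W'^{(l_0)}\sim P_{W'^{(l_0)}|W^{(l_0)}}(\cdot\,|\,W^{(l_0)})$ independently of everything else. The joint distribution on $\mathcal W\times\mathcal W$ is $P_{W'W|S}(W',W|S)=P_{W'|W}(W'|W)P_{W|S}(W|S)$, and $P_{W'|S}$ denotes its marginal in $W'$. For a loss $\ell:\mathcal W\times\mathcal Z\to[0,\infty)$ let $L(w)=\mathbb E_{Z\sim P_Z}[\ell(w,Z)]$ and $\hat L(w,S)=\frac1n\sum_{i=1}^n\ell(w,Z_i)$; for a distribution $P$ on $\mathcal W$, $L(P)=\int L(w)P(dw)$ and $\hat L_S(P)=\int\hat L(w,S)P(dw)$. The wireless generalization error is $\Delta=L(P_{W'|S})-\hat L_S(P_{W|S})$. The metric on $\mathcal W$ is $d_{\mathcal W}(W',W)=\sum_{l=1}^{L+1}d^{(l)}(W'^{(l)},W^{(l)})$ where each $d^{(l)}$ is a metric on $\mathcal W^{(l)}$. "$\sigma$-sub-Gaussian" means $\log\mathbb E[e^{\lambda(\ell(w,Z)-L(w))}]\le\lambda^2\sigma^2/2$ for all $\lambda\in\mathbb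 R$; "$K$-Lipschitz" means $|\ell(w,z)-\ell(w',z)|\le K\,d_{\mathcal W}(w,w')$. "Data-independent" means not depending on $S$. $D(\cdot\|\cdot)$ is the Kullback–Leibler divergence (natural logarithm). *)

theory Defs
  imports "HOL-Probability.Probability"
begin

text \<open>sigma-sub-Gaussian random variable X under probability measure M:
  X integrable and log E[exp(lambda (X - E X))] <= lambda^2 sigma^2 / 2 for all real lambda,
  written (equivalently, without logarithm) as E[exp(lambda (X - E X))] <= exp(lambda^2 sigma^2/2),
  the expectation of the nonnegative function being taken in ennreal so it is always defined.\<close>
definition sub_gaussian :: "'a measure \<Rightarrow> ('a \<Rightarrow> real) \<Rightarrow> real \<Rightarrow> bool" where
  "sub_gaussian M X \<sigma> \<longleftrightarrow> integrable M X \<and>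
     (\<forall>t::real. (\<integral>\<^sup>+ x. ennreal (exp (t * (X x - (\<integral>y. X y \<partial>M)))) \<partial>M)
                  \<le> ennreal (exp (t\<^sup>2 * \<sigma>\<^sup>2 / 2)))"

definition KL :: "'a measure \<Rightarrow> 'a measure \<Rightarrow> ereal" where
  "KL P Q = (if absolutely_continuous Q P \<and> integrable P (entropy_density (exp 1) Q P)
             then ereal (KL_divergence (exp 1) Q P) else \<infinity>)"

definition eln :: "ennreal \<Rightarrow> ereal" where
  "eln x = (if x = \<top> then \<infinity> else if x = 0 then -\<infinity> else ereal (ln (enn2real x)))"

text \<open>Layers are indexed 1..L+1, with channel layer l0.  The weights of a layer l ~= l0 live in
  the measurable space Ml l (carrier inside a common universe type 'v); the learnable weights are
  the (extensional) tuples in PiM of those spaces.  The channel layer weights are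
  (M, B) :: real^'d^'d \<times> (real^'d).\<close>

definition learn_idx :: "nat \<Rightarrow> nat \<Rightarrow> nat set" where
  "learn_idx L l0 = {1..Suc L} - {l0}"

definition learn_space :: "nat \<Rightarrow> nat \<Rightarrow> (nat \<Rightarrow> 'v measure) \<Rightarrow> (nat \<Rightarrow> 'v) measure" where
  "learn_space L l0 Ml = PiM (learn_idx L l0) Ml"

type_synonym ('v, 'd) weights = "(nat \<Rightarrow> 'v) \<times> ((real^'d^'d) \<times> (real^'d))"

definition weight_space ::
  "nat \<Rightarrow> nat \<Rightarrow> (nat \<Rightarrow> 'v measure) \<Rightarrow> ('v, 'd::finite) weights measure" where
  "weight_space L l0 Ml = learn_space L l0 Ml \<Otimes>\<^sub>M (borel :: ((real^'d^'d) \<times> (real^'d)) measure)"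

definition dW :: "nat \<Rightarrow> nat \<Rightarrow> (nat \<Rightarrow> 'v \<Rightarrow> 'v \<Rightarrow> real)
    \<Rightarrow> ((real^'d^'d) \<times> (real^'d) \<Rightarrow> (real^'d^'d) \<times> (real^'d) \<Rightarrow> real)
    \<Rightarrow> ('v, 'd::finite) weights \<Rightarrow> ('v, 'd) weights \<Rightarrow> real" where
  "dW L l0 dl dc W' W = (\<Sum>l\<in>learn_idx L l0. dl l (fst W' l) (fst W l)) + dc (snd W') (snd W)"

text \<open>Channel-free training distribution P_{W|S} = P_{W~|S} \<otimes> delta_{(I_d, 0)}.\<close>
definition train_dist ::
  "nat \<Rightarrow> nat \<Rightarrow> (nat \<Rightarrow> 'v measure) \<Rightarrow> (nat \<Rightarrow> 'v) measure \<Rightarrow> ('v, 'd::finite) weights measure" where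
  "train_dist L l0 Ml A = distr A (weight_space L l0 Ml) (\<lambda>f. (f, (mat 1, 0)))"

text \<open>Deployment kernel P_{W'|W}: learnable weights copied, channel layer resampled by the channel.\<close>
definition deploy ::
  "nat \<Rightarrow> nat \<Rightarrow> (nat \<Rightarrow> 'v measure) \<Rightarrow> ((real^'d^'d) \<times> (real^'d) \<Rightarrow> ((real^'d^'d) \<times> (real^'d)) measure)
    \<Rightarrow> ('v, 'd::finite) weights \<Rightarrow> ('v, 'd) weights measure" where
  "deploy L l0 Ml ch W = distr (ch (snd W)) (weight_space L l0 Ml) (\<lambda>c'. (fst W, c'))"

text \<open>Joint distribution P_{W'W|S}(W', W) = P_{W'|W}(W'|W) P_{W|S}(W|S), first component W'.\<close>
definition joint_dist ::
  "nat \<Rightarrow> nat \<Rightarrow> (nat \<Rightarrow> 'v measure) \<Rightarrow> ((real^'d^'d) \<times> (real^'d) \<Rightarrow> ((real^'d^'d) \<times> (real^'d)) measure)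
    \<Rightarrow> (nat \<Rightarrow> 'v) measure \<Rightarrow> (('v, 'd::finite) weights \<times> ('v, 'd) weights) measure" where
  "joint_dist L l0 Ml ch A =
     train_dist L l0 Ml A \<bind> (\<lambda>W. distr (deploy L l0 Ml ch W)
        (weight_space L l0 Ml \<Otimes>\<^sub>M weight_space L l0 Ml) (\<lambda>W'. (W', W)))"

definition deploy_dist ::
  "nat \<Rightarrow> nat \<Rightarrow> (nat \<Rightarrow> 'v measure) \<Rightarrow> ((real^'d^'d) \<times> (real^'d) \<Rightarrow> ((real^'d^'d) \<times> (real^'d)) measure)
    \<Rightarrow> (nat \<Rightarrow> 'v) measure \<Rightarrow> ('v, 'd::finite) weights measure" where
  "deploy_dist L l0 Ml ch A = distr (joint_dist L l0 Ml ch A) (weight_space L l0 Ml) fst"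

definition pop_risk :: "('w \<Rightarrow> 'z \<Rightarrow> real) \<Rightarrow> 'z measure \<Rightarrow> 'w \<Rightarrow> real" where
  "pop_risk loss PZ w = (\<integral>z. loss w z \<partial>PZ)"

definition emp_risk :: "('w \<Rightarrow> 'z \<Rightarrow> real) \<Rightarrow> nat \<Rightarrow> 'w \<Rightarrow> (nat \<Rightarrow> 'z) \<Rightarrow> real" where
  "emp_risk loss n w S = (\<Sum>i<n. loss w (S i)) / real n"

definition wireless_gen_error ::
  "('w \<Rightarrow> 'z \<Rightarrow> real) \<Rightarrow> 'z measure \<Rightarrow> nat \<Rightarrow> 'w measure \<Rightarrow> 'w measure \<Rightarrow> (nat \<Rightarrow> 'z) \<Rightarrow> real" where
  "wireless_gen_error loss PZ n PW' PW S =
     (\<integral>w. pop_risk loss PZ w \<partial>PW') - (\<integral>w. emp_risk loss n w S \<partial>PW)"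

end

theory Submission
  imports Defs
begin

lemma DV:
  fixes P Q :: "'a measure" and f :: "'a \<Rightarrow> real"
  assumes P: "prob_space P" and Q: "prob_space Q" and sPQ: "sets P = sets Q"
    and ac: "absolutely_continuous Q P" and ie: "integrable P (entropy_density (exp 1) Q P)"
    and fm[measurable]: "f \<in> borel_measurable Q" and fi: "integrable P f"
  shows "ennreal (exp (integral\<^sup>L P f - KL_divergence (exp 1) Q P)) \<le> (\<integral>\<^sup>+x. ennreal (exp (f x)) \<partial>Q)"
proof -
  interpret P: prob_space P by fact
  interpret Q: prob_space Q by fact
  define R where "R = RN_deriv Q P"
  have Rm[measurable]: "R \<in> borel_measurable Q" unfolding R_def by simp
  have dens: "density Q R = P" unfolding R_def
    using Q.density_RN_deriv[OF ac sPQ] .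
  have fin: "AE x in Q. R x \<noteq> \<infinity>" unfolding R_def
    by (rule Q.RN_deriv_finite[OF _ ac sPQ]) (simp add: P.sigma_finite_measure)
  define g where "g x = f x - ln (enn2real (R x))" for x
  have fmP: "f \<in> borel_measurable P" using fm by (simp add: measurable_cong_sets[OF sPQ refl])
  have gm[measurable]: "g \<in> borel_measurable Q" unfolding g_def by measurable
  have edef: "entropy_density (exp 1) Q P = (\<lambda>x. ln (enn2real (R x)))"
    unfolding entropy_density_def R_def by (auto simp: log_ln[symmetric])
  have gi: "integrable P g" unfolding g_def using fi ie edef by auto
  have intg: "integral\<^sup>L P g = integral\<^sup>L P f - KL_divergence (exp 1) Q P"
    unfolding g_def KL_divergence_def edef using fi ie edef by (simp add: Bochner_Integration.integral_diff)
  define a where "a = integral\<^sup>L P g"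
  define h where "h x = exp a * (1 + g x - a)" for x
  have hi: "integrable P h" unfolding h_def using gi by auto
  have inth: "integral\<^sup>L P h = exp a"
    unfolding h_def using gi by (simp add: a_def P.prob_space algebra_simps)
  have "exp a \<le> integral\<^sup>L P (\<lambda>x. max 0 (h x))"
    unfolding inth[symmetric] by (rule integral_mono) (use hi in auto)
  then have "ennreal (exp a) \<le> ennreal (integral\<^sup>L P (\<lambda>x. max 0 (h x)))" by simp
  also have "\<dots> = (\<integral>\<^sup>+x. ennreal (max 0 (h x)) \<partial>P)"
    by (rule nn_integral_eq_integral[symmetric]) (use hi in auto)
  also have "\<dots> \<le> (\<integral>\<^sup>+x. ennreal (exp (g x)) \<partial>P)"
  proof (rule nn_integral_mono)
    fix x
    have "exp (g x - a) \<ge> 1 + (g x - a)" by (rule exp_ge_add_one_self)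
    then have "exp a * (1 + g x - a) \<le> exp a * exp (g x - a)" by (intro mult_left_mono) (auto simp: algebra_simps)
    also have "\<dots> = exp (g x)" by (simp add: exp_diff)
    finally show "ennreal (max 0 (h x)) \<le> ennreal (exp (g x))" unfolding h_def by (intro ennreal_leI) auto
  qed
  also have "\<dots> = (\<integral>\<^sup>+x. R x * ennreal (exp (g x)) \<partial>Q)"
    by (subst dens[symmetric]) (simp add: nn_integral_density)
  also have "\<dots> \<le> (\<integral>\<^sup>+x. ennreal (exp (f x)) \<partial>Q)"
  proof (rule nn_integral_mono_AE)
    show "AE x in Q. R x * ennreal (exp (g x)) \<le> ennreal (exp (f x))"
      using fin
    proof eventually_elim
      case (elim x)
      show ?case
      proof (cases "R x = 0")
        case True then show ?thesis by simp
      next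
        case False
        then have pos: "enn2real (R x) > 0" using elim by (simp add: enn2real_positive_iff less_top zero_less_iff_neq_zero)
        have "R x = ennreal (enn2real (R x))" using elim by (simp add: ennreal_enn2real_if)
        then have "R x * ennreal (exp (g x)) = ennreal (enn2real (R x) * exp (g x))"
          by (metis ennreal_mult'' exp_ge_zero)
        also have "enn2real (R x) * exp (g x) = exp (f x)"
          unfolding g_def using pos by (simp add: exp_diff)
        finally show ?thesis by simp
      qed
    qed
  qed
  finally show ?thesis unfolding a_def intg .
qed
lemma joint_facts:
  fixes ch :: "(real^'d^'d) \<times> (real^'d) \<Rightarrow> ((real^'d^'d) \<times> (real^'d)) measure"
    and AS :: "(nat \<Rightarrow> 'v) measure"
  assumes AS: "AS \<in> space (prob_algebra (learn_space L l0 Ml))"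
    and channel: "ch \<in> borel \<rightarrow>\<^sub>M prob_algebra borel"
  shows "prob_space (joint_dist L l0 Ml ch AS)"
    "sets (joint_dist L l0 Ml ch AS) = sets (weight_space L l0 Ml \<Otimes>\<^sub>M weight_space L l0 Ml)"
    "distr (joint_dist L l0 Ml ch AS) (weight_space L l0 Ml) snd = train_dist L l0 Ml AS"
    "prob_space (train_dist L l0 Ml AS :: ('v, 'd) weights measure)"
    "sets (train_dist L l0 Ml AS :: ('v, 'd) weights measure) = sets (weight_space L l0 Ml)"
proof -
  let ?WS = "weight_space L l0 Ml :: ('v,'d) weights measure"
  let ?LS = "learn_space L l0 Ml"
  have ASp: "prob_space AS" and ASs: "sets AS = sets ?LS" using AS by (auto simp: space_prob_algebra)
  have sndm: "snd \<in> ?WS \<rightarrow>\<^sub>M borel" unfolding weight_space_def by simp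
  have chm: "(\<lambda>W. ch (snd W)) \<in> ?WS \<rightarrow>\<^sub>M prob_algebra borel"
    by (rule measurable_compose[OF sndm channel])
  have pm: "(\<lambda>(W, c'). (fst W, c')) \<in> ?WS \<Otimes>\<^sub>M borel \<rightarrow>\<^sub>M ?WS"
    unfolding weight_space_def by simp
  have dm: "deploy L l0 Ml ch \<in> ?WS \<rightarrow>\<^sub>M prob_algebra ?WS"
    unfolding deploy_def by (rule measurable_distr_prob_space2[OF chm pm])
  have sw: "(\<lambda>(W, W'). (W', W)) \<in> ?WS \<Otimes>\<^sub>M ?WS \<rightarrow>\<^sub>M ?WS \<Otimes>\<^sub>M ?WS" by simp
  have Kn: "(\<lambda>W. distr (deploy L l0 Ml ch W) (?WS \<Otimes>\<^sub>M ?WS) (\<lambda>W'. (W', W))) \<in> ?WS \<rightarrow>\<^sub>M prob_algebra (?WS \<Otimes>\<^sub>M ?WS)"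
    by (rule measurable_distr_prob_space2[OF dm sw])
  have tm: "(\<lambda>f. (f, (mat 1, 0))) \<in> AS \<rightarrow>\<^sub>M ?WS"
    unfolding weight_space_def using ASs by (simp add: measurable_cong_sets[OF ASs refl])
  show tp: "prob_space (train_dist L l0 Ml AS :: ('v, 'd) weights measure)" unfolding train_dist_def
    by (rule prob_space.prob_space_distr[OF ASp tm])
  show ts: "sets (train_dist L l0 Ml AS :: ('v, 'd) weights measure) = sets ?WS" unfolding train_dist_def by simp
  have tA: "train_dist L l0 Ml AS \<in> space (prob_algebra ?WS)" using tp ts by (simp add: space_prob_algebra)
  show "prob_space (joint_dist L l0 Ml ch AS)" unfolding joint_dist_def
    by (rule prob_space_bind'[OF tA Kn])
  show "sets (joint_dist L l0 Ml ch AS) = sets (?WS \<Otimes>\<^sub>M ?WS)" unfolding joint_dist_def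
    by (rule sets_bind'[OF tA Kn])
  have ne: "space (train_dist L l0 Ml AS :: ('v, 'd) weights measure) \<noteq> {}" using tp by (simp add: prob_space.not_empty)
  have "distr (joint_dist L l0 Ml ch AS) ?WS snd
      = train_dist L l0 Ml AS \<bind> (\<lambda>W. distr (distr (deploy L l0 Ml ch W) (?WS \<Otimes>\<^sub>M ?WS) (\<lambda>W'. (W', W))) ?WS snd)"
    unfolding joint_dist_def
    by (rule distr_bind[OF _ ne, where K="?WS \<Otimes>\<^sub>M ?WS"]) (simp_all add: measurable_cong_sets[OF ts refl] measurable_prob_algebraD[OF Kn])
  also have "\<dots> = train_dist L l0 Ml AS \<bind> return ?WS"
  proof (rule bind_cong[OF refl])
    fix W :: "('v, 'd) weights" assume W: "W \<in> space (train_dist L l0 Ml AS)"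
    have W': "W \<in> space ?WS" using W sets_eq_imp_space_eq[OF ts] by simp
    have dp: "prob_space (deploy L l0 Ml ch W)" and ds: "sets (deploy L l0 Ml ch W) = sets ?WS"
      using measurable_space[OF dm W'] by (auto simp: space_prob_algebra)
    have "distr (distr (deploy L l0 Ml ch W) (?WS \<Otimes>\<^sub>M ?WS) (\<lambda>W'. (W', W))) ?WS snd
        = distr (deploy L l0 Ml ch W) ?WS (\<lambda>_. W)"
    proof -
      have m1: "(\<lambda>W'. (W', W)) \<in> deploy L l0 Ml ch W \<rightarrow>\<^sub>M ?WS \<Otimes>\<^sub>M ?WS"
        unfolding measurable_cong_sets[OF ds refl] using W' by (intro measurable_Pair measurable_ident measurable_const) auto
      show ?thesis by (subst distr_distr[OF measurable_snd m1]) (simp add: comp_def)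
    qed
    also have "\<dots> = return ?WS W" using prob_space.distr_const[OF dp W'] .
    finally show "distr (distr (deploy L l0 Ml ch W) (?WS \<Otimes>\<^sub>M ?WS) (\<lambda>W'. (W', W))) ?WS snd = return ?WS W" .
  qed
  also have "\<dots> = train_dist L l0 Ml AS" by (rule bind_return''[OF ts])
  finally show "distr (joint_dist L l0 Ml ch AS) ?WS snd = train_dist L l0 Ml AS" .
qed

theorem theorem1:
  fixes PZ :: "'z measure" and n L l0 :: nat
    and Ml :: "nat \<Rightarrow> 'v measure" and dl :: "nat \<Rightarrow> 'v \<Rightarrow> 'v \<Rightarrow> real"
    and dc :: "(real^'d^'d) \<times> (real^'d) \<Rightarrow> (real^'d^'d) \<times> (real^'d) \<Rightarrow> real"
    and loss :: "('v, 'd::finite) weights \<Rightarrow> 'z \<Rightarrow> real"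
    and A :: "(nat \<Rightarrow> 'z) \<Rightarrow> (nat \<Rightarrow> 'v) measure"
    and ch :: "(real^'d^'d) \<times> (real^'d) \<Rightarrow> ((real^'d^'d) \<times> (real^'d)) measure"
    and Q :: "(('v, 'd) weights \<times> ('v, 'd) weights) measure"
    and \<sigma> K k \<epsilon> :: real
  assumes PZ: "prob_space PZ"
    and n_pos: "n > 0"
    and l0: "l0 \<in> {1..Suc L}"
    and metrics: "\<forall>l\<in>learn_idx L l0. Metric_space (space (Ml l)) (dl l)"
    and metric_ch: "Metric_space UNIV dc"
    and metrics_meas: "\<forall>l\<in>learn_idx L l0. case_prod (dl l) \<in> borel_measurable (Ml l \<Otimes>\<^sub>M Ml l)"
    and metric_ch_meas: "case_prod dc \<in> borel_measurable borel"
    and loss_meas: "(\<lambda>(w, z). loss w z) \<in> borel_measurable (weight_space L l0 Ml \<Otimes>\<^sub>M PZ)"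
    and loss_nonneg: "\<forall>w\<in>space (weight_space L l0 Ml). \<forall>z\<in>space PZ. 0 \<le> loss w z"
    and subgauss: "\<forall>w\<in>space (weight_space L l0 Ml). sub_gaussian PZ (loss w) \<sigma>"
    and lipschitz: "\<forall>z\<in>space PZ. \<forall>w\<in>space (weight_space L l0 Ml). \<forall>w'\<in>space (weight_space L l0 Ml).
                      \<bar>loss w z - loss w' z\<bar> \<le> K * dW L l0 dl dc w w'"
    and alg: "A \<in> PiM {..<n} (\<lambda>_. PZ) \<rightarrow>\<^sub>M prob_algebra (learn_space L l0 Ml)"
    and channel: "ch \<in> borel \<rightarrow>\<^sub>M prob_algebra borel"
    and well_defined: "\<forall>S\<in>space (PiM {..<n} (\<lambda>_. PZ)).
         integrable (deploy_dist L l0 Ml ch (A S)) (pop_risk loss PZ)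
       \<and> integrable (train_dist L l0 Ml (A S)) (\<lambda>w. emp_risk loss n w S)"
    and Q: "prob_space Q"
    and Q_sets: "sets Q = sets (weight_space L l0 Ml \<Otimes>\<^sub>M weight_space L l0 Ml)"
    and k_pos: "k > 0"
    and eps: "0 < \<epsilon>" "\<epsilon> < 1"
  shows "\<exists>E\<in>sets (PiM {..<n} (\<lambda>_. PZ)).
           measure (PiM {..<n} (\<lambda>_. PZ)) E \<ge> 1 - \<epsilon> \<and>
           (\<forall>S\<in>E.
              ereal (wireless_gen_error loss PZ n (deploy_dist L l0 Ml ch (A S)) (train_dist L l0 Ml (A S)) S)
              \<le> ereal (k * \<sigma>\<^sup>2 / (2 * real n))
                 + (KL (joint_dist L l0 Ml ch (A S)) Q - ereal (ln \<epsilon>)) / ereal k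
                 + eln (\<integral>\<^sup>+ p. ennreal (exp (k * K * dW L l0 dl dc (fst p) (snd p))) \<partial>Q) / ereal k)"
proof -
  let ?WS = "weight_space L l0 Ml :: ('v, 'd) weights measure"
  let ?SP = "PiM {..<n} (\<lambda>_. PZ)"
  let ?Lr = "pop_risk loss PZ"
  define F where "F S p = ennreal (exp (k * (?Lr (fst p) - emp_risk loss n (snd p) S)))" for S p
  define G where "G p = ennreal (exp (k * K * dW L l0 dl dc (fst p) (snd p)))" for p :: "('v, 'd) weights \<times> ('v, 'd) weights"
  define CS where "CS S = (\<integral>\<^sup>+p. F S p \<partial>Q)" for S
  define C where "C = (\<integral>\<^sup>+p. G p \<partial>Q)"
  define c0 where "c0 = exp (k\<^sup>2 * \<sigma>\<^sup>2 / (2 * real n))"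
  interpret PZ: prob_space PZ by fact
  interpret Q: prob_space Q by fact
  have SPp: "prob_space ?SP" by (rule prob_space_PiM) (simp add: PZ)
  interpret SP: prob_space ?SP by fact
  interpret PP: product_sigma_finite "\<lambda>_::nat. PZ"
    by (simp add: product_sigma_finite_def PZ.sigma_finite_measure)
  interpret SQ: pair_sigma_finite ?SP Q
    by (simp add: pair_sigma_finite_def SP.sigma_finite_measure Q.sigma_finite_measure)
  note loss_meas[measurable]
  have Lm[measurable]: "?Lr \<in> borel_measurable ?WS"
    unfolding pop_risk_def by (rule PZ.borel_measurable_lebesgue_integral) (use loss_meas in simp)
  have empm[measurable]: "(\<lambda>x. emp_risk loss n (snd (snd x)) (fst x)) \<in> borel_measurable (?SP \<Otimes>\<^sub>M (?WS \<Otimes>\<^sub>M ?WS))"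
    unfolding emp_risk_def by measurable
  have sSQ: "sets (?SP \<Otimes>\<^sub>M Q) = sets (?SP \<Otimes>\<^sub>M (?WS \<Otimes>\<^sub>M ?WS))"
    by (rule sets_pair_measure_cong[OF refl Q_sets])
  have Fm: "(\<lambda>(S, p). F S p) \<in> borel_measurable (?SP \<Otimes>\<^sub>M Q)"
    unfolding measurable_cong_sets[OF sSQ refl] F_def by measurable
  have dlm: "(\<lambda>p. dl l (fst (fst p) l) (fst (snd p) l)) \<in> borel_measurable (?WS \<Otimes>\<^sub>M ?WS)"
    if l: "l \<in> learn_idx L l0" for l
  proof -
    have "(\<lambda>p. (fst (fst p) l, fst (snd p) l)) \<in> ?WS \<Otimes>\<^sub>M ?WS \<rightarrow>\<^sub>M Ml l \<Otimes>\<^sub>M Ml l"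
      unfolding weight_space_def learn_space_def using l by measurable
    from measurable_compose[OF this metrics_meas[rule_format, OF l]] show ?thesis by simp
  qed
  have dcm: "(\<lambda>p. dc (snd (fst p)) (snd (snd p))) \<in> borel_measurable (?WS \<Otimes>\<^sub>M ?WS)"
  proof -
    have "(\<lambda>p. (snd (fst p), snd (snd p))) \<in> ?WS \<Otimes>\<^sub>M ?WS \<rightarrow>\<^sub>M borel \<Otimes>\<^sub>M borel"
      unfolding weight_space_def by measurable
    then have "(\<lambda>p. (snd (fst p), snd (snd p))) \<in> ?WS \<Otimes>\<^sub>M ?WS \<rightarrow>\<^sub>M borel"
      by (simp add: borel_prod)
    from measurable_compose[OF this metric_ch_meas] show ?thesis by simp
  qed
  have dm: "(\<lambda>p. dW L l0 dl dc (fst p) (snd p)) \<in> borel_measurable (?WS \<Otimes>\<^sub>M ?WS)"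
    unfolding dW_def by (intro borel_measurable_add borel_measurable_sum dlm dcm)
  have Gm: "G \<in> borel_measurable Q"
    unfolding measurable_cong_sets[OF Q_sets refl] G_def using dm by measurable
  have CSm: "CS \<in> borel_measurable ?SP"
    unfolding CS_def by (rule Q.borel_measurable_nn_integral) (use Fm in simp)
  have Cpos: "C > 0"
  proof (rule ccontr)
    assume "\<not> C > 0"
    then have "C = 0" by (simp add: zero_less_iff_neq_zero)
    then have "AE p in Q. G p = 0" unfolding C_def using nn_integral_0_iff_AE[OF Gm] by simp
    then have "AE p in Q. False" by (simp add: G_def)
    then show False by (simp add: Q.AE_False)
  qed
  define H where "H w S = ennreal (exp (k * (?Lr w - emp_risk loss n w S)))" for w S
  have Hprod: "H w S = (\<Prod>i\<in>{..<n}. ennreal (exp ((k / n) * (?Lr w - loss w (S i)))))" for w S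
  proof -
    have "(\<Sum>i\<in>{..<n}. (k / n) * (?Lr w - loss w (S i))) = (k / n) * (\<Sum>i\<in>{..<n}. (?Lr w - loss w (S i)))"
      by (simp add: sum_distrib_left)
    also have "\<dots> = (k / n) * (n * ?Lr w - (\<Sum>i\<in>{..<n}. loss w (S i)))"
      by (simp add: sum_subtractf)
    also have "\<dots> = k * (?Lr w - emp_risk loss n w S)"
      using n_pos by (simp add: emp_risk_def field_simps)
    finally have "k * (?Lr w - emp_risk loss n w S) = (\<Sum>i\<in>{..<n}. (k / n) * (?Lr w - loss w (S i)))" by simp
    then show ?thesis unfolding H_def by (simp add: exp_sum prod_ennreal)
  qed
  have Hbound: "(\<integral>\<^sup>+S. H w S \<partial>?SP) \<le> ennreal c0" if w: "w \<in> space ?WS" for w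
  proof -
    have lwm[measurable]: "loss w \<in> borel_measurable PZ" using w by measurable
    define a where "a = (\<integral>\<^sup>+z. ennreal (exp ((k / n) * (?Lr w - loss w z))) \<partial>PZ)"
    have "(\<integral>\<^sup>+S. H w S \<partial>?SP) = (\<Prod>i\<in>{..<n}. a)"
      unfolding Hprod a_def by (rule PP.product_nn_integral_prod) auto
    also have "\<dots> = a ^ n" by simp
    also have "a \<le> ennreal (exp ((k / n)\<^sup>2 * \<sigma>\<^sup>2 / 2))"
    proof -
      have sg: "(\<integral>\<^sup>+x. ennreal (exp ((- (k / n)) * (loss w x - (\<integral>y. loss w y \<partial>PZ)))) \<partial>PZ)
          \<le> ennreal (exp ((- (k / n))\<^sup>2 * \<sigma>\<^sup>2 / 2))"
        using subgauss w unfolding sub_gaussian_def by blast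
      have "a = (\<integral>\<^sup>+x. ennreal (exp ((- (k / n)) * (loss w x - (\<integral>y. loss w y \<partial>PZ)))) \<partial>PZ)"
        unfolding a_def pop_risk_def by (simp add: algebra_simps)
      with sg show ?thesis by simp
    qed
    then have "a ^ n \<le> ennreal (exp ((k / n)\<^sup>2 * \<sigma>\<^sup>2 / 2)) ^ n" by (rule power_mono) simp
    also have "\<dots> = ennreal c0"
    proof -
      have "(exp ((k / n)\<^sup>2 * \<sigma>\<^sup>2 / 2)) ^ n = exp (n * ((k / n)\<^sup>2 * \<sigma>\<^sup>2 / 2))"
        by (rule exp_of_nat_mult[symmetric])
      also have "n * ((k / n)\<^sup>2 * \<sigma>\<^sup>2 / 2) = k\<^sup>2 * \<sigma>\<^sup>2 / (2 * real n)"
        using n_pos by (simp add: power2_eq_square field_simps)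
      finally show ?thesis by (simp add: ennreal_power c0_def)
    qed
    finally show ?thesis .
  qed
  have spQ: "space Q = space ?WS \<times> space ?WS"
    using sets_eq_imp_space_eq[OF Q_sets] by (simp add: space_pair_measure)
  have inner: "(\<integral>\<^sup>+S. F S p \<partial>?SP) \<le> G p * ennreal c0" if p: "p \<in> space Q" for p
  proof -
    obtain W' W where pW: "p = (W', W)" and W': "W' \<in> space ?WS" and W: "W \<in> space ?WS"
      using p spQ by (cases p) auto
    have Hm: "H W' \<in> borel_measurable ?SP" unfolding H_def emp_risk_def using W' by measurable
    have "(\<integral>\<^sup>+S. F S p \<partial>?SP) \<le> (\<integral>\<^sup>+S. G p * H W' S \<partial>?SP)"
    proof (rule nn_integral_mono)
      fix S assume S: "S \<in> space ?SP"
      have Si: "S i \<in> space PZ" if "i < n" for i using S that by (auto simp: space_PiM)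
      have "emp_risk loss n W' S - emp_risk loss n W S = (\<Sum>i<n. loss W' (S i) - loss W (S i)) / n"
        unfolding emp_risk_def by (simp add: sum_subtractf diff_divide_distrib)
      also have "\<dots> \<le> (\<Sum>i<n. K * dW L l0 dl dc W' W) / n"
        using lipschitz Si W W' by (intro divide_right_mono sum_mono) (auto dest!: abs_le_D1)
      also have "\<dots> = K * dW L l0 dl dc W' W" using n_pos by simp
      finally have "k * (emp_risk loss n W' S - emp_risk loss n W S) \<le> k * (K * dW L l0 dl dc W' W)"
        using k_pos by (intro mult_left_mono) auto
      then have "k * (?Lr W' - emp_risk loss n W S) \<le> k * K * dW L l0 dl dc W' W + k * (?Lr W' - emp_risk loss n W' S)"
        by (simp add: algebra_simps)
      then have "F S p \<le> ennreal (exp (k * K * dW L l0 dl dc W' W) * exp (k * (?Lr W' - emp_risk loss n W' S)))"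
        unfolding F_def pW by (simp add: exp_add[symmetric])
      also have "\<dots> = G p * H W' S" unfolding G_def H_def pW by (simp add: ennreal_mult)
      finally show "F S p \<le> G p * H W' S" .
    qed
    also have "\<dots> = G p * (\<integral>\<^sup>+S. H W' S \<partial>?SP)" by (rule nn_integral_cmult[OF Hm])
    also have "\<dots> \<le> G p * ennreal c0" by (intro mult_left_mono Hbound W') simp
    finally show ?thesis .
  qed
  have Ebound: "(\<integral>\<^sup>+S. CS S \<partial>?SP) \<le> ennreal c0 * C"
  proof -
    have "(\<integral>\<^sup>+S. CS S \<partial>?SP) = (\<integral>\<^sup>+p. (\<integral>\<^sup>+S. F S p \<partial>?SP) \<partial>Q)"
      unfolding CS_def using SQ.Fubini'[OF Fm] by simp
    also have "\<dots> \<le> (\<integral>\<^sup>+p. G p * ennreal c0 \<partial>Q)" by (rule nn_integral_mono) (rule inner)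
    also have "\<dots> = C * ennreal c0" unfolding C_def by (rule nn_integral_multc[OF Gm])
    finally show ?thesis by (simp add: mult.commute)
  qed
  have main: "ennreal (exp (k * wireless_gen_error loss PZ n (deploy_dist L l0 Ml ch (A S)) (train_dist L l0 Ml (A S)) S
                  - KL_divergence (exp 1) Q (joint_dist L l0 Ml ch (A S)))) \<le> CS S"
    if S: "S \<in> space ?SP" and KLf: "KL (joint_dist L l0 Ml ch (A S)) Q \<noteq> \<infinity>" for S
  proof -
    let ?P = "joint_dist L l0 Ml ch (A S)"
    have AS: "A S \<in> space (prob_algebra (learn_space L l0 Ml))" using measurable_space[OF alg S] .
    note jf = joint_facts[OF AS channel]
    have ac: "absolutely_continuous Q ?P" and ie: "integrable ?P (entropy_density (exp 1) Q ?P)"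
      using KLf by (auto simp: KL_def split: if_splits)
    have sPQ: "sets ?P = sets Q" using jf(2) Q_sets by simp
    define f where "f p = k * (?Lr (fst p) - emp_risk loss n (snd p) S)" for p :: "('v, 'd) weights \<times> ('v, 'd) weights"
    have em: "(\<lambda>p. emp_risk loss n (snd p) S) \<in> borel_measurable (?WS \<Otimes>\<^sub>M ?WS)"
      using measurable_Pair2[OF empm S] by simp
    have fm: "f \<in> borel_measurable Q"
      unfolding measurable_cong_sets[OF Q_sets refl] f_def using em by measurable
    have fstm: "fst \<in> ?P \<rightarrow>\<^sub>M ?WS" and sndm: "snd \<in> ?P \<rightarrow>\<^sub>M ?WS"
      by (simp_all add: measurable_cong_sets[OF jf(2) refl])
    have emW: "(\<lambda>w. emp_risk loss n w S) \<in> borel_measurable ?WS"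
    proof -
      have "(\<lambda>w. (w, w)) \<in> ?WS \<rightarrow>\<^sub>M ?WS \<Otimes>\<^sub>M ?WS" by simp
      from measurable_compose[OF this em] show ?thesis by simp
    qed
    have wd: "integrable (deploy_dist L l0 Ml ch (A S)) ?Lr"
      "integrable (train_dist L l0 Ml (A S)) (\<lambda>w. emp_risk loss n w S)"
      using well_defined S by auto
    have i1: "integrable ?P (\<lambda>p. ?Lr (fst p))"
      using wd(1) integrable_distr_eq[OF fstm Lm] unfolding deploy_dist_def by simp
    have i2: "integrable ?P (\<lambda>p. emp_risk loss n (snd p) S)"
      using wd(2) integrable_distr_eq[OF sndm emW] unfolding jf(3) by simp
    have fi: "integrable ?P f" unfolding f_def using i1 i2 by auto
    have intf: "integral\<^sup>L ?P f = k * wireless_gen_error loss PZ n (deploy_dist L l0 Ml ch (A S)) (train_dist L l0 Ml (A S)) S"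
      unfolding f_def wireless_gen_error_def deploy_dist_def jf(3)[symmetric]
      using i1 i2 by (simp add: integral_distr[OF fstm Lm] integral_distr[OF sndm emW])
    have "ennreal (exp (integral\<^sup>L ?P f - KL_divergence (exp 1) Q ?P)) \<le> (\<integral>\<^sup>+x. ennreal (exp (f x)) \<partial>Q)"
      by (rule DV[OF jf(1) Q sPQ ac ie fm fi])
    then show ?thesis unfolding intf CS_def F_def f_def by simp
  qed
  have KLninf: "KL X Y \<noteq> -\<infinity>" for X Y :: "(('v, 'd) weights \<times> ('v, 'd) weights) measure"
    by (simp add: KL_def)
  have CSC: "(\<integral>\<^sup>+ p. ennreal (exp (k * K * dW L l0 dl dc (fst p) (snd p))) \<partial>Q) = C"
    unfolding C_def G_def ..
  show ?thesis
  proof (cases "C = \<top>")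
    case True
    have "eln C = \<infinity>" using True by (simp add: eln_def)
    then have inf: "eln C / ereal k = \<infinity>" using k_pos by simp
    show ?thesis
    proof (intro bexI[of _ "space ?SP"] conjI ballI)
      show "1 - \<epsilon> \<le> measure ?SP (space ?SP)" using eps by (simp add: SP.prob_space)
      fix S assume "S \<in> space ?SP"
      have "(KL (joint_dist L l0 Ml ch (A S)) Q - ereal (ln \<epsilon>)) / ereal k \<noteq> -\<infinity>"
        using KLninf[of "joint_dist L l0 Ml ch (A S)" Q] k_pos
        by (cases "KL (joint_dist L l0 Ml ch (A S)) Q") auto
      then show "ereal (wireless_gen_error loss PZ n (deploy_dist L l0 Ml ch (A S)) (train_dist L l0 Ml (A S)) S)
              \<le> ereal (k * \<sigma>\<^sup>2 / (2 * real n))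
                 + (KL (joint_dist L l0 Ml ch (A S)) Q - ereal (ln \<epsilon>)) / ereal k
                 + eln (\<integral>\<^sup>+ p. ennreal (exp (k * K * dW L l0 dl dc (fst p) (snd p))) \<partial>Q) / ereal k"
        unfolding CSC inf by simp
    qed simp
  next
    case False
    define Cr where "Cr = enn2real C"
    have CCr: "C = ennreal Cr" using False by (simp add: Cr_def ennreal_enn2real_if)
    have Crpos: "Cr > 0" using Cpos CCr by simp
    have elnC: "eln C = ereal (ln Cr)" using Cpos False by (simp add: eln_def Cr_def)
    define B where "B = c0 * Cr / \<epsilon>"
    have c0pos: "c0 > 0" unfolding c0_def by simp
    have Bpos: "B > 0" unfolding B_def using c0pos Crpos eps by simp
    define X where "X = {S \<in> space ?SP. ennreal B < CS S}"
    have Xs: "X \<in> sets ?SP" unfolding X_def using CSm by measurable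
    have "ennreal B * emeasure ?SP X = (\<integral>\<^sup>+S. ennreal B * indicator X S \<partial>?SP)"
      by (rule nn_integral_cmult_indicator[OF Xs, symmetric])
    also have "\<dots> \<le> (\<integral>\<^sup>+S. CS S \<partial>?SP)"
      by (rule nn_integral_mono) (auto simp: X_def indicator_def less_imp_le)
    also have "\<dots> \<le> ennreal c0 * C" by (rule Ebound)
    also have "\<dots> = ennreal (B * \<epsilon>)" unfolding CCr B_def using eps c0pos Crpos
      by (simp add: ennreal_mult[symmetric])
    finally have "ennreal (B * measure ?SP X) \<le> ennreal (B * \<epsilon>)"
      using Bpos by (simp add: SP.emeasure_eq_measure ennreal_mult[symmetric])
    then have "B * measure ?SP X \<le> B * \<epsilon>" using Bpos eps by (simp add: ennreal_le_iff)
    then have mX: "measure ?SP X \<le> \<epsilon>" using Bpos by simp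
    define E where "E = space ?SP - X"
    have Es: "E \<in> sets ?SP" unfolding E_def using Xs by auto
    have mE: "measure ?SP E \<ge> 1 - \<epsilon>" unfolding E_def using SP.prob_compl[OF Xs] mX by simp
    show ?thesis
    proof (intro bexI[OF _ Es] conjI mE ballI)
      fix S assume SE: "S \<in> E"
      then have S: "S \<in> space ?SP" and CSB: "CS S \<le> ennreal B" by (auto simp: E_def X_def not_less)
      let ?D = "wireless_gen_error loss PZ n (deploy_dist L l0 Ml ch (A S)) (train_dist L l0 Ml (A S)) S"
      show "ereal ?D
              \<le> ereal (k * \<sigma>\<^sup>2 / (2 * real n))
                 + (KL (joint_dist L l0 Ml ch (A S)) Q - ereal (ln \<epsilon>)) / ereal k
                 + eln (\<integral>\<^sup>+ p. ennreal (exp (k * K * dW L l0 dl dc (fst p) (snd p))) \<partial>Q) / ereal k"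
      proof (cases "KL (joint_dist L l0 Ml ch (A S)) Q = \<infinity>")
        case True
        then show ?thesis unfolding CSC elnC using k_pos by simp
      next
        case KLf: False
        define KLd where "KLd = KL_divergence (exp 1) Q (joint_dist L l0 Ml ch (A S))"
        have KLe: "KL (joint_dist L l0 Ml ch (A S)) Q = ereal KLd"
          using KLf by (simp add: KL_def KLd_def split: if_splits)
        have "ennreal (exp (k * ?D - KLd)) \<le> ennreal B"
          using main[OF S KLf] CSB unfolding KLd_def by (rule order_trans)
        then have "exp (k * ?D - KLd) \<le> B" using Bpos by (simp add: ennreal_le_iff)
        then have "k * ?D - KLd \<le> ln B" using Bpos by (metis ln_exp ln_le_cancel_iff exp_gt_zero)
        also have "ln B = k\<^sup>2 * \<sigma>\<^sup>2 / (2 * real n) + ln Cr - ln \<epsilon>"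
          unfolding B_def c0_def using Crpos eps by (simp add: ln_div ln_mult)
        finally have i: "k * ?D - KLd \<le> k\<^sup>2 * \<sigma>\<^sup>2 / (2 * real n) + ln Cr - ln \<epsilon>" .
        have eq: "k * (k * \<sigma>\<^sup>2 / (2 * real n) + (KLd - ln \<epsilon>) / k + ln Cr / k)
            = k\<^sup>2 * \<sigma>\<^sup>2 / (2 * real n) + KLd - ln \<epsilon> + ln Cr"
          using k_pos by (simp add: field_simps power2_eq_square)
        have "k * ?D \<le> k * (k * \<sigma>\<^sup>2 / (2 * real n) + (KLd - ln \<epsilon>) / k + ln Cr / k)"
          unfolding eq using i by linarith
        then have "?D \<le> k * \<sigma>\<^sup>2 / (2 * real n) + (KLd - ln \<epsilon>) / k + ln Cr / k"
          using k_pos by simp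
        then show ?thesis unfolding CSC elnC KLe using k_pos by simp
      qed
    qed
  qed
qed

end
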